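(* Let $\operatorname{Cs}(4)=\{x,y,z\}$ be the quandle with multiplication $xx=x$, $yy=y$, $zz=z$, $xy=x$, $xz=y$, $yx=y$, $yz=x$, $zx=z$, $zy=z$. Then the set of non-zero idempotents of the integral quandle ring $\mathbb{Z}[\operatorname{Cs}(4)]$ is $$I(\mathbb{Z}[\operatorname{Cs}(4)])=\big\{(1-\beta)x+\beta y,\ \alpha x+\alpha y+(1-2\alpha)z~|~\alpha,\beta\in\mathbb{Z}\big\}.$$
   Context: For a quandle $Q$, the quandle ring $\mathbb{Z}[Q]$ is the free abelian group with basis $Q$, with multiplication $\big(\sum_i\alpha_i q_i\big)\big(\sum_j\beta_j q_j\big)=\sum_{i,j}\alpha_i\beta_j (q_iq_j)$ extending the quandle operation bilinearly. $I(\mathbb{Z}[Q])$ denotes the set of non-zero elements $w$ with $w^2=w$. *)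

theory Defs
  imports Main
begin

datatype cs4 = X | Y | Z

fun cs4_op :: "cs4 \<Rightarrow> cs4 \<Rightarrow> cs4" where
  "cs4_op X X = X" | "cs4_op Y Y = Y" | "cs4_op Z Z = Z"
| "cs4_op X Y = X" | "cs4_op X Z = Y"
| "cs4_op Y X = Y" | "cs4_op Y Z = X"
| "cs4_op Z X = Z" | "cs4_op Z Y = Z"

lemma UNIV_cs4: "(UNIV :: cs4 set) = {X, Y, Z}"
  using cs4.exhaust by auto

instance cs4 :: finite
  by standard (simp add: UNIV_cs4)

text \<open>Elements of the integral quandle ring Z[Cs(4)]: since the basis is finite,
  the free abelian group is all coefficient functions cs4 => int.\<close>
type_synonym cs4_ring = "cs4 \<Rightarrow> int"

definition basis_elt :: "cs4 \<Rightarrow> cs4_ring" where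
  "basis_elt q = (\<lambda>r. if r = q then 1 else 0)"

definition qr_mult :: "cs4_ring \<Rightarrow> cs4_ring \<Rightarrow> cs4_ring" where
  "qr_mult u v = (\<lambda>r. \<Sum>p\<in>UNIV. \<Sum>q\<in>UNIV. if cs4_op p q = r then u p * v q else 0)"

definition idempotents_cs4 :: "cs4_ring set" where
  "idempotents_cs4 = {w. w \<noteq> (\<lambda>_. 0) \<and> qr_mult w w = w}"

end

theory Submission
  imports Defs
begin

lemma qm_X: "qr_mult u v X = u X * v X + u X * v Y + u Y * v Z"
  by (simp add: qr_mult_def UNIV_cs4)
lemma qm_Y: "qr_mult u v Y = u Y * v Y + u X * v Z + u Y * v X"
  by (simp add: qr_mult_def UNIV_cs4)
lemma qm_Z: "qr_mult u v Z = u Z * v Z + u Z * v X + u Z * v Y"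
  by (simp add: qr_mult_def UNIV_cs4)

lemma fun_cs4: "(f :: cs4 \<Rightarrow> int) = g \<longleftrightarrow> f X = g X \<and> f Y = g Y \<and> f Z = g Z"
proof
  assume "f X = g X \<and> f Y = g Y \<and> f Z = g Z"
  then show "f = g"
    by (intro ext) (metis cs4.exhaust)
qed simp

lemma solve:
  fixes a b c :: int
  assumes "a*a + a*b + b*c = a" "b*b + a*c + b*a = b" "c*c + c*a + c*b = c"
    and "\<not> (a = 0 \<and> b = 0 \<and> c = 0)"
  shows "(c = 0 \<and> a + b = 1) \<or> (a = b \<and> c = 1 - 2*a)"
proof (cases "c = 0")
  case True
  have i1: "a*(a+b-1) = a*a + a*b + b*c - a" using True by (simp add: algebra_simps)
  have i2: "b*(a+b-1) = b*b + a*c + b*a - b" using True by (simp add: algebra_simps)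
  have "a*(a+b-1) = 0" using i1 assms(1) by linarith
  moreover have "b*(a+b-1) = 0" using i2 assms(2) by linarith
  ultimately show ?thesis using True assms(4) by auto
next
  case False
  have i3: "c*(a+b+c-1) = c*c + c*a + c*b - c" by (simp add: algebra_simps)
  have "c*(a+b+c-1) = 0" using i3 assms(3) by linarith
  then have s: "a+b+c = 1" using False by simp
  have i4: "c*(b-a) = (a*a + a*b + b*c - a) - a*(a+b+c-1)" by (simp add: algebra_simps)
  have "c*(b-a) = 0" using i4 s assms(1) by simp
  then have "a = b" using False by simp
  then show ?thesis using s by simp
qed

theorem proposition4p2:
  shows "idempotents_cs4 =
    {(\<lambda>r. (1 - \<beta>) * basis_elt X r + \<beta> * basis_elt Y r) | \<beta> :: int. True} \<union>
    {(\<lambda>r. \<alpha> * basis_elt X r + \<alpha> * basis_elt Y r + (1 - 2 * \<alpha>) * basis_elt Z r)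
       | \<alpha> :: int. True}"
proof (intro equalityI subsetI)
  fix w assume "w \<in> idempotents_cs4"
  then have nz: "w \<noteq> (\<lambda>_. 0)" and e: "qr_mult w w = w" by (auto simp: idempotents_cs4_def)
  have e1: "w X * w X + w X * w Y + w Y * w Z = w X" using e qm_X[of w w] by simp
  have e2: "w Y * w Y + w X * w Z + w Y * w X = w Y" using e qm_Y[of w w] by simp
  have e3: "w Z * w Z + w Z * w X + w Z * w Y = w Z" using e qm_Z[of w w] by simp
  have n: "\<not> (w X = 0 \<and> w Y = 0 \<and> w Z = 0)" using nz fun_cs4[of w "\<lambda>_. 0"] by auto
  from solve[OF e1 e2 e3 n] show "w \<in> {(\<lambda>r. (1 - \<beta>) * basis_elt X r + \<beta> * basis_elt Y r) | \<beta> :: int. True} \<union>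
    {(\<lambda>r. \<alpha> * basis_elt X r + \<alpha> * basis_elt Y r + (1 - 2 * \<alpha>) * basis_elt Z r)
       | \<alpha> :: int. True}"
  proof
    assume h: "w Z = 0 \<and> w X + w Y = 1"
    have "w = (\<lambda>r. (1 - w Y) * basis_elt X r + w Y * basis_elt Y r)"
      using h unfolding fun_cs4 basis_elt_def by simp
    then show ?thesis by (intro UnI1 CollectI exI[where x="w Y"]) simp
  next
    assume h: "w X = w Y \<and> w Z = 1 - 2 * w X"
    have "w = (\<lambda>r. w X * basis_elt X r + w X * basis_elt Y r + (1 - 2 * w X) * basis_elt Z r)"
      using h unfolding fun_cs4 basis_elt_def by simp
    then show ?thesis by (intro UnI2 CollectI exI[where x="w X"]) simp
  qed
next
  fix w assume "w \<in> {(\<lambda>r. (1 - \<beta>) * basis_elt X r + \<beta> * basis_elt Y r) | \<beta> :: int. True} \<union>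
    {(\<lambda>r. \<alpha> * basis_elt X r + \<alpha> * basis_elt Y r + (1 - 2 * \<alpha>) * basis_elt Z r)
       | \<alpha> :: int. True}"
  then show "w \<in> idempotents_cs4"
  proof (elim UnE CollectE exE conjE)
    fix b assume w: "w = (\<lambda>r. (1 - b) * basis_elt X r + b * basis_elt Y r)"
    have v: "w X = 1 - b" "w Y = b" "w Z = 0" by (simp_all add: w basis_elt_def)
    have "qr_mult w w = w"
      unfolding fun_cs4 qm_X qm_Y qm_Z v by (simp add: algebra_simps)
    moreover have "w \<noteq> (\<lambda>_. 0)"
      unfolding fun_cs4 v by simp
    ultimately show ?thesis by (simp add: idempotents_cs4_def)
  next
    fix a assume w: "w = (\<lambda>r. a * basis_elt X r + a * basis_elt Y r + (1 - 2 * a) * basis_elt Z r)"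
    have v: "w X = a" "w Y = a" "w Z = 1 - 2 * a" by (simp_all add: w basis_elt_def)
    have "qr_mult w w = w"
      unfolding fun_cs4 qm_X qm_Y qm_Z v by (simp add: algebra_simps)
    moreover have "w \<noteq> (\<lambda>_. 0)"
      unfolding fun_cs4 v by simp
    ultimately show ?thesis by (simp add: idempotents_cs4_def)
  qed
qed

end
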